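(* Let $r, s, m, n$ be positive integers, and let $f: V(H_{n,m}) \rightarrow \{-r,s\}$ be a function. If there are directed $m$-paths $P$ and $Q$ in $H_{n,m}$ such that $f(V(P)) < f(V(Q))$, then for any $p \in L(r,s,m)$ with $f(V(P)) \le p \le f(V(Q))$ there is a directed $m$-path $P^*$ in $H_{n,m}$ such that $f(V(P^* )) = p$.
   Context: For a set $Y$ of vertices, $f(Y)=\sum_{y\in Y}f(y)$. $H_{n,m}$ is the directed graph whose vertex set is the disjoint union of $V_1,\dots,V_m$ with $|V_i|=n$, and whose arc set is $\bigcup_{i=1}^{m-1}\{(v,w): v\in V_i, w\in V_{i+1}\}$. A directed $m$-path is a directed path with $m$ vertices. $L(r,s,m)=\{-rx+sy : x,y\in\mathbb{Z}, x,y\ge 0, x+y=m\}$. *)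

theory Defs
  imports Main
begin

text \<open>Vertices of H_{n,m}: pairs (i, j) with layer i in {1..m} and index j in {1..n};
  V_i = {i} x {1..n}.\<close>
definition H_verts :: "nat \<Rightarrow> nat \<Rightarrow> (nat \<times> nat) set" where
  "H_verts n m = {1..m} \<times> {1..n}"

definition H_arc :: "nat \<Rightarrow> nat \<Rightarrow> nat \<times> nat \<Rightarrow> nat \<times> nat \<Rightarrow> bool" where
  "H_arc n m v w \<longleftrightarrow> v \<in> H_verts n m \<and> w \<in> H_verts n m \<and> fst w = fst v + 1"

definition H_dipath :: "nat \<Rightarrow> nat \<Rightarrow> (nat \<times> nat) list \<Rightarrow> bool" where
  "H_dipath n m P \<longleftrightarrow> P \<noteq> [] \<and> distinct P \<and> set P \<subseteq> H_verts n m \<and>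
     (\<forall>i. i + 1 < length P \<longrightarrow> H_arc n m (P ! i) (P ! (i + 1)))"

definition H_dipath_k :: "nat \<Rightarrow> nat \<Rightarrow> nat \<Rightarrow> (nat \<times> nat) list \<Rightarrow> bool" where
  "H_dipath_k n m k P \<longleftrightarrow> H_dipath n m P \<and> length P = k"

definition L_set :: "int \<Rightarrow> int \<Rightarrow> nat \<Rightarrow> int set" where
  "L_set r s m = {- r * int x + s * int y | x y. x + y = m}"

end

theory Submission
  imports Defs
begin

lemma layers:
  assumes "H_dipath_k n m m P" "i < m"
  shows "fst (P!i) = i+1 \<and> snd (P!i) \<in> {1..n}"
proof -
  have len: "length P = m" and sub: "set P \<subseteq> H_verts n m"
    and arc0: "\<forall>i. i + 1 < length P \<longrightarrow> H_arc n m (P ! i) (P ! (i + 1))"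
    using assms(1) unfolding H_dipath_k_def H_dipath_def by simp_all
  have arc: "fst (P!(i+1)) = fst (P!i) + 1" if "i + 1 < m" for i
    using arc0 that len unfolding H_arc_def by simp
  have mem: "\<And>j. j < m \<Longrightarrow> fst (P!j) \<in> {1..m} \<and> snd (P!j) \<in> {1..n}"
  proof -
    fix j assume "j < m"
    hence "P!j \<in> set P" using len by simp
    hence "P!j \<in> {1..m} \<times> {1..n}" using sub unfolding H_verts_def by blast
    thus "fst (P!j) \<in> {1..m} \<and> snd (P!j) \<in> {1..n}" by (cases "P!j") simp
  qed
  have ind: "\<And>j. j < m \<Longrightarrow> fst (P!j) = fst (P!0) + j"
  proof -
    fix j show "j < m \<Longrightarrow> fst (P!j) = fst (P!0) + j"
    proof (induction j)
      case (Suc j) thus ?case using arc[of j] by simp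
    qed simp
  qed
  have m0: "m > 0" using assms(2) by simp
  have "fst (P!(m-1)) = fst (P!0) + (m-1)" using ind[of "m-1"] m0 by simp
  moreover have "fst (P!(m-1)) \<le> m" using mem[of "m-1"] m0 by auto
  moreover have "fst (P!0) \<ge> 1" using mem[of 0] m0 by auto
  ultimately have "fst (P!0) = 1" by linarith
  moreover note ind[OF assms(2)] mem[OF assms(2)]
  ultimately show ?thesis by simp
qed

lemma path_eq:
  assumes "H_dipath_k n m m P"
  shows "P = map (\<lambda>i. (Suc i, snd (P!i))) [0..<m]"
proof -
  have len: "length P = m" using assms unfolding H_dipath_k_def by simp
  show ?thesis
  proof (rule nth_equalityI)
    show "length P = length (map (\<lambda>i. (Suc i, snd (P!i))) [0..<m])" using len by simp
  next
    fix i assume "i < length P"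
    hence i: "i < m" using len by simp
    have "fst (P!i) = Suc i" using layers[OF assms i] by simp
    hence "P!i = (Suc i, snd (P!i))" by (metis prod.collapse)
    thus "P!i = map (\<lambda>i. (Suc i, snd (P!i))) [0..<m] ! i" using i by simp
  qed
qed

definition mkpath :: "nat \<Rightarrow> (nat \<Rightarrow> nat) \<Rightarrow> (nat \<times> nat) list" where
  "mkpath m c = map (\<lambda>i. (Suc i, c i)) [0..<m]"

lemma mkpath_ok:
  assumes "m > 0" "\<forall>i<m. c i \<in> {1..n}"
  shows "H_dipath_k n m m (mkpath m c)"
  using assms unfolding H_dipath_k_def H_dipath_def H_arc_def mkpath_def H_verts_def
  by (auto simp: distinct_map inj_on_def)

lemma mkpath_sum:
  "sum f (set (mkpath m c)) = (\<Sum>i<m. f (Suc i, c i))"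
proof -
  have "set (mkpath m c) = (\<lambda>i. (Suc i, c i)) ` {..<m}"
    unfolding mkpath_def by auto
  moreover have "inj_on (\<lambda>i. (Suc i, c i)) {..<m}" by (auto simp: inj_on_def)
  ultimately show ?thesis by (simp add: sum.reindex)
qed

lemma sum_form:
  fixes r s :: int
  assumes "\<forall>i<m. g i \<in> {-r, s}"
  shows "\<exists>t. (\<Sum>i<m. g i) = - r * int m + (r+s) * t"
  using assms
proof (induction m)
  case 0 then show ?case by simp
next
  case (Suc m)
  then obtain t where t: "(\<Sum>i<m. g i) = - r * int m + (r+s) * t" by auto
  have "g m = -r \<or> g m = s" using Suc.prems by auto
  then show ?case
  proof
    assume "g m = -r" then show ?thesis using t
      by (intro exI[of _ t]) (simp add: algebra_simps)
  next
    assume "g m = s" then show ?thesis using t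
      by (intro exI[of _ "t+1"]) (simp add: algebra_simps)
  qed
qed

lemma mult_small:
  fixes d t :: int
  assumes "0 \<le> d * t" "d * t < d" "d > 0"
  shows "t = 0"
proof -
  have "t \<ge> 0"
  proof (rule ccontr)
    assume "\<not> t \<ge> 0" hence "d * t < 0" using assms(3) by (simp add: mult_pos_neg)
    thus False using assms(1) by simp
  qed
  moreover have "t < 1" using assms by (metis mult.right_neutral mult_less_cancel_left_pos)
  ultimately show ?thesis by simp
qed

theorem lemma4p2:
  fixes r s :: int and m n :: nat and f :: "nat \<times> nat \<Rightarrow> int"
    and P Q :: "(nat \<times> nat) list" and p :: int
  assumes "r > 0" "s > 0" "m > 0" "n > 0"
    and "\<forall>v \<in> H_verts n m. f v \<in> {-r, s}"
    and "H_dipath_k n m m P" "H_dipath_k n m m Q"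
    and "sum f (set P) < sum f (set Q)"
    and "p \<in> L_set r s m"
    and "sum f (set P) \<le> p" "p \<le> sum f (set Q)"
  shows "\<exists>P'. H_dipath_k n m m P' \<and> sum f (set P') = p"
proof -
  define a where "a = (\<lambda>i. snd (P!i))"
  define b where "b = (\<lambda>i. snd (Q!i))"
  have aP: "P = mkpath m a" unfolding a_def mkpath_def using path_eq[OF assms(6)] .
  have bQ: "Q = mkpath m b" unfolding b_def mkpath_def using path_eq[OF assms(7)] .
  have ar: "\<forall>i<m. a i \<in> {1..n}" using layers[OF assms(6)] a_def by auto
  have br: "\<forall>i<m. b i \<in> {1..n}" using layers[OF assms(7)] b_def by auto
  define c where "c = (\<lambda>k i. if i < k then b i else a i)"
  define g where "g = (\<lambda>k. (\<Sum>i<m. f (Suc i, c k i)))"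
  have cr: "\<And>k. \<forall>i<m. c k i \<in> {1..n}" using ar br c_def by auto
  have fv: "\<And>k i. i < m \<Longrightarrow> f (Suc i, c k i) \<in> {-r, s}"
    using assms(5) cr unfolding H_verts_def by auto
  have g0: "g 0 = sum f (set P)" using aP mkpath_sum[of f m a] g_def c_def by simp
  have gm: "g m = sum f (set Q)"
  proof -
    have "g m = (\<Sum>i<m. f (Suc i, b i))" unfolding g_def c_def by (rule sum.cong) auto
    thus ?thesis using bQ mkpath_sum[of f m b] by simp
  qed
  have step: "\<And>k. k < m \<Longrightarrow> g (Suc k) \<le> g k + (r + s)"
  proof -
    fix k assume k: "k < m"
    have split: "\<And>k'. g k' = (\<Sum>i\<in>{..<m}-{k}. f (Suc i, c k' i)) + f (Suc k, c k' k)"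
      unfolding g_def using k by (simp add: sum.remove[of "{..<m}" k] add.commute)
    have same: "(\<Sum>i\<in>{..<m}-{k}. f (Suc i, c (Suc k) i)) = (\<Sum>i\<in>{..<m}-{k}. f (Suc i, c k i))"
      by (rule sum.cong) (auto simp: c_def)
    have "f (Suc k, c (Suc k) k) \<le> f (Suc k, c k k) + (r + s)"
      using fv[OF k, of "Suc k"] fv[OF k, of k] assms(1,2) by auto
    thus "g (Suc k) \<le> g k + (r + s)" using split[of k] split[of "Suc k"] same by simp
  qed
  have gform: "\<And>k. \<exists>t. g k = - r * int m + (r+s) * t"
  proof -
    fix k show "\<exists>t. g k = - r * int m + (r+s) * t"
      unfolding g_def by (rule sum_form) (use fv in auto)
  qed
  obtain x y where xy: "x + y = m" "p = - r * int x + s * int y"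
    using assms(9) unfolding L_set_def by auto
  have pform: "p = - r * int m + (r+s) * int y"
    using xy by (simp add: algebra_simps flip: xy(1))
  define K where "K = {k. k \<le> m \<and> g k \<le> p}"
  have "0 \<in> K" using K_def g0 assms(10) by simp
  have finK: "finite K" unfolding K_def by simp
  define k where "k = Max K"
  have kK: "k \<in> K" using Max_in[OF finK] \<open>0 \<in> K\<close> k_def by auto
  have kmax: "\<And>j. j \<in> K \<Longrightarrow> j \<le> k" using Max_ge[OF finK] k_def by auto
  have gk: "g k = p"
  proof (cases "k = m")
    case True thus ?thesis using kK K_def gm assms(11) by simp
  next
    case False
    hence km: "k < m" using kK K_def by simp
    have "Suc k \<notin> K" using kmax by fastforce
    hence "g (Suc k) > p" using km K_def by auto
    hence lt: "p - g k < r + s" using step[OF km] by simp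
    obtain t where t: "g k = - r * int m + (r+s) * t" using gform by blast
    have "p - g k = (r+s) * (int y - t)" using t pform by (simp add: algebra_simps)
    moreover have "0 \<le> p - g k" using kK K_def by simp
    ultimately have "int y - t = 0" using mult_small[of "r+s" "int y - t"] lt assms(1,2) by simp
    thus ?thesis using t pform by simp
  qed
  show ?thesis
    apply (rule exI[of _ "mkpath m (c k)"])
    using mkpath_ok[OF assms(3) cr[of k]] mkpath_sum[of f m "c k"] gk g_def by simp
qed

end
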